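(* Let $\beta\in(1/2,1)$, $\eta\in(0,1)$ and $a>0$, and assume the coupling below. There exist $c=c(\beta)>0$ and $n_0=n_0(\beta,\eta,a)$ such that for all $n\ge n_0$ and all $u\in[n^{\eta-1},1/2]$, \[ \Pr\Big(\sqrt n\big(\tilde F^{(0)}(u)-\mathbb E\tilde F^{(0)}(u)\big)>a\sqrt{u(1-u)}\Big)\le e^{-a c\, n^{\eta/2}}+e^{-n^{1-(\beta+1/2)/2}} . \]
   Context: $\epsilon_n=n^{-\beta}$. Coupling: $I\subset\{1,\dots,n\}$ random with each $i$ included independently with probability $\epsilon_n$; $Q^{(0)}_1,\dots,Q^{(0)}_n$ i.i.d. $\mathrm{Unif}(0,1)$ independent of $I$. Define $\tilde F^{(0)}(t)=\frac1n\sum_{i\in I}\mathbf 1(Q^{(0)}_i\le t)$ (normalized by $n$, though only $|I|$ terms appear), and $\mathbb E$ denotes unconditional expectation. *)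

theory Defs
  imports "HOL-Probability.Probability"
begin

text \<open>Coupling space for sample size n: outcome omega maps index i < n to
  (i in I, Q_i). Coordinates are independent; i in I with probability eps_n = n powr (-beta),
  Q_i uniform on (0,1).\<close>

definition eps_n :: "real \<Rightarrow> nat \<Rightarrow> real" where
  "eps_n \<beta> n = real n powr (-\<beta>)"

definition coupling_space :: "real \<Rightarrow> nat \<Rightarrow> (nat \<Rightarrow> bool \<times> real) measure" where
  "coupling_space \<beta> n =
     PiM {..<n} (\<lambda>_. measure_pmf (bernoulli_pmf (eps_n \<beta> n)) \<Otimes>\<^sub>M uniform_measure lborel {0<..<1})"

definition F0 :: "nat \<Rightarrow> real \<Rightarrow> (nat \<Rightarrow> bool \<times> real) \<Rightarrow> real" where
  "F0 n t \<omega> = (1 / real n) * (\<Sum>i\<in>{i. i < n \<and> fst (\<omega> i)}. (if snd (\<omega> i) \<le> t then 1 else 0))"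

end

theory Submission imports Defs begin

lemma chernoff_prod:
  fixes K :: "'a measure" and g :: "'a \<Rightarrow> real" and n :: nat
  assumes K: "prob_space K" and gm[measurable]: "g \<in> borel_measurable K"
    and g01: "\<And>x. g x = 0 \<or> g x = 1" and t: "t \<ge> 0"
  shows "measure (PiM {..<n} (\<lambda>_. K)) {\<omega> \<in> space (PiM {..<n} (\<lambda>_. K)).
            (\<Sum>i<n. g (\<omega> i)) \<ge> n * (\<integral>x. g x \<partial>K) + t}
         \<le> exp ((exp 1 - 2) * n * (\<integral>x. g x \<partial>K) - t)"
proof -
  interpret K: prob_space K by (rule K)
  interpret product_prob_space "\<lambda>_. K" "{..<n}"
    using K by (simp add: product_prob_space_def product_sigma_finite_def product_prob_space_axioms_def prob_space_imp_sigma_finite)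
  define M where "M = PiM {..<n} (\<lambda>_. K)"
  define p where "p = (\<integral>x. g x \<partial>K)"
  have gint: "integrable K g"
  proof (rule K.integrable_const_bound[where B=1])
    have "\<bar>g x\<bar> \<le> 1" for x using g01[of x] by auto
    then show "AE x in K. norm (g x) \<le> 1" by simp
  qed simp
  have eg: "exp (g x) = 1 + (exp 1 - 1) * g x" for x using g01[of x] by auto
  have eint: "integrable K (\<lambda>x. exp (g x))" unfolding eg using gint by auto
  have Eexp: "(\<integral>x. exp (g x) \<partial>K) = 1 + (exp 1 - 1) * p"
    unfolding eg p_def using gint by (simp add: K.prob_space)
  have Sm[measurable]: "(\<lambda>\<omega>. \<Sum>i<n. g (\<omega> i)) \<in> borel_measurable M"
    unfolding M_def by measurable
  have int: "integrable M (\<lambda>\<omega>. \<Prod>i<n. exp (g (\<omega> i)))"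
  proof -
    have "\<bar>\<Prod>i<n. exp (g (x i))\<bar> \<le> exp 1 ^ n" for x
    proof -
      have "(\<Prod>i<n. exp (g (x i))) \<le> (\<Prod>i<n. exp 1)"
        by (rule prod_mono) (use g01 in \<open>auto\<close>, metis exp_le_cancel_iff order.refl zero_le_one)
      then show ?thesis by (simp add: prod_nonneg)
    qed
    then show ?thesis unfolding M_def
      by (intro integrable_const_bound[where B="exp 1 ^ n"]) (auto intro!: always_eventually)
  qed
  have "measure M {\<omega> \<in> space M. (\<Sum>i<n. g (\<omega> i)) \<ge> n * p + t}
        \<le> exp (-1 * (n * p + t)) * (\<integral>\<omega>\<in>space M. exp (1 * (\<Sum>i<n. g (\<omega> i))) \<partial>M)"
    unfolding M_def
  proof (rule P.Chernoff_ineq_ge)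
    show "set_integrable (Pi\<^sub>M {..<n} (\<lambda>_. K)) (space (Pi\<^sub>M {..<n} (\<lambda>_. K))) (\<lambda>x. exp (1 * (\<Sum>i<n. g (x i))))"
      using int unfolding M_def set_integrable_def
      by (rule Bochner_Integration.integrable_cong[THEN iffD1, rotated 2]) (auto simp: exp_sum indicator_def)
  qed auto
  also have "(\<integral>\<omega>\<in>space M. exp (1 * (\<Sum>i<n. g (\<omega> i))) \<partial>M) = (\<integral>\<omega>. (\<Prod>i<n. exp (g (\<omega> i))) \<partial>M)"
    using int by (simp add: set_integral_space exp_sum)
  also have "\<dots> = (\<Prod>i<n. (\<integral>x. exp (g x) \<partial>K))"
    unfolding M_def by (rule product_integral_prod) (auto intro: eint)
  also have "\<dots> = (1 + (exp 1 - 1) * p) ^ n" by (simp add: Eexp)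
  also have "exp (-1 * (n * p + t)) * \<dots> \<le> exp (-1 * (n * p + t)) * exp ((exp 1 - 1) * p) ^ n"
  proof (intro mult_left_mono power_mono)
    have "0 \<le> p" unfolding p_def using g01 by (intro integral_nonneg_AE) (auto intro!: always_eventually, metis order.refl zero_le_one)
    then show "0 \<le> 1 + (exp 1 - 1) * p" by (simp add: add_nonneg_nonneg)
    show "1 + (exp 1 - 1) * p \<le> exp ((exp 1 - 1) * p)" by (rule exp_ge_add_one_self)
  qed simp
  also have "exp (-1 * (n * p + t)) * exp ((exp 1 - 1) * p) ^ n = exp ((exp 1 - 2) * n * p - t)"
    by (simp add: exp_of_nat_mult[symmetric] exp_add[symmetric] algebra_simps) 
  finally show ?thesis unfolding M_def p_def .
qed

lemma numeric:
  fixes n :: nat and \<beta> \<eta> a u :: real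
  assumes n: "n \<ge> 1" and b: "1/2 < \<beta>" and e: "0 < \<eta>" and a: "0 < a"
    and big: "real n powr (\<beta> - 1/2) \<ge> 4 / a"
    and u1: "real n powr (\<eta> - 1) \<le> u" and u2: "u \<le> 1/2"
  shows "(exp 1 - 2) * real n * (real n powr (-\<beta>) * u) - a * sqrt (real n) * sqrt (u * (1 - u))
         \<le> - a * (1/4) * real n powr (\<eta> / 2)"
proof -
  define s where "s = sqrt (real n * u)"
  have npos: "real n > 0" using n by simp
  have "real n powr (\<eta> - 1) > 0" using npos by simp
  hence upos: "u > 0" using u1 by linarith
  have "real n * real n powr (\<eta> - 1) = real n powr \<eta>"
    using npos by (simp add: powr_diff powr_add)
  hence "real n powr \<eta> \<le> real n * u" using u1 npos by (metis mult_left_mono less_imp_le)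
  hence "sqrt (real n powr \<eta>) \<le> s" unfolding s_def by simp
  moreover have "sqrt (real n powr \<eta>) = real n powr (\<eta>/2)"
    by (subst powr_half_sqrt[symmetric]) (auto simp: powr_powr)
  ultimately have s1: "real n powr (\<eta>/2) \<le> s" by simp
  have "sqrt (u * (1 - u)) \<ge> sqrt (u / 4)" using u2 upos by (intro real_sqrt_le_mono) (simp add: field_simps)
  hence "sqrt (real n) * sqrt (u * (1 - u)) \<ge> sqrt (real n) * sqrt (u/4)" by (simp add: mult_left_mono)
  moreover have "sqrt (real n) * sqrt (u/4) = s / 2" unfolding s_def by (simp add: real_sqrt_mult real_sqrt_divide)
  ultimately have t: "a * sqrt (real n) * sqrt (u * (1 - u)) \<ge> a * (s / 2)"
    using a by (simp add: mult.assoc mult_left_mono)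
  have sq: "sqrt (real n) = real n powr (1/2)" using npos by (simp add: powr_half_sqrt)
  have "real n powr (1/2 - \<beta>) * (sqrt (real n) * u) = (real n powr (1/2 - \<beta>) * real n powr (1/2)) * u"
    by (simp add: sq)
  also have "real n powr (1/2 - \<beta>) * real n powr (1/2) = real n powr (1 - \<beta>)"
    by (simp add: powr_add[symmetric])
  also have "real n powr (1 - \<beta>) = real n * real n powr (-\<beta>)"
    using npos by (simp add: powr_diff powr_minus divide_inverse)
  finally have "real n * (real n powr (-\<beta>) * u) = real n powr (1/2 - \<beta>) * (sqrt (real n) * u)"
    by (simp only: mult.assoc eq_commute)
  also have "sqrt (real n) * u \<le> s"
  proof -
    have su: "sqrt u \<le> 1" using u2 by simp
    have "u = sqrt u * sqrt u" using upos by simp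
    also have "\<dots> \<le> sqrt u * 1" using su upos by (intro mult_left_mono) auto
    finally have "u \<le> sqrt u" by simp
    thus ?thesis unfolding s_def by (simp add: real_sqrt_mult mult_left_mono)
  qed
  hence "real n powr (1/2 - \<beta>) * (sqrt (real n) * u) \<le> real n powr (1/2 - \<beta>) * s"
    by (simp add: mult_left_mono)
  also have "real n powr (1/2 - \<beta>) \<le> a / 4"
  proof -
    have "real n powr (1/2 - \<beta>) = 1 / real n powr (\<beta> - 1/2)" using npos by (simp add: powr_minus_divide[symmetric])
    also have "\<dots> \<le> 1 / (4 / a)" using big a npos by (intro divide_left_mono) auto
    finally show ?thesis by simp
  qed
  hence "real n powr (1/2 - \<beta>) * s \<le> a / 4 * s" by (rule mult_right_mono) (use upos in \<open>auto simp: s_def\<close>)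
  finally have m: "real n * (real n powr (-\<beta>) * u) \<le> a / 4 * s" .
  have c1: "exp 1 - 2 \<le> (1::real)" using exp_le by simp
  have X0: "0 \<le> real n * (real n powr (-\<beta>) * u)" using npos upos by simp
  have "(exp 1 - 2) * real n * (real n powr (-\<beta>) * u) = (exp 1 - 2) * (real n * (real n powr (-\<beta>) * u))"
    by (simp only: mult.assoc)
  also have "\<dots> \<le> 1 * (real n * (real n powr (-\<beta>) * u))" by (rule mult_right_mono[OF c1 X0])
  also have "\<dots> \<le> a / 4 * s" using m by simp
  finally have l1: "(exp 1 - 2) * real n * (real n powr (-\<beta>) * u) \<le> a * (1/4) * s" by simp
  have l2: "a * (1/4) * real n powr (\<eta> / 2) \<le> a * (1/4) * s" using s1 a by (intro mult_left_mono) auto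
  have l3: "a * (s / 2) = 2 * (a * (1/4) * s)" by simp
  from l1 l2 l3 t show ?thesis by linarith
qed

lemma intK:
  fixes \<epsilon> u :: real
  assumes e: "0 \<le> \<epsilon>" "\<epsilon> \<le> 1" and u: "0 < u" "u < 1"
  shows "(\<integral>x. (if fst x \<and> snd x \<le> u then 1 else 0 :: real) \<partial>(measure_pmf (bernoulli_pmf \<epsilon>) \<Otimes>\<^sub>M uniform_measure lborel {0<..<1})) = \<epsilon> * u"
proof -
  define U where "U = uniform_measure lborel {0<..<1::real}"
  define B where "B = measure_pmf (bernoulli_pmf \<epsilon>)"
  have Up: "prob_space U" unfolding U_def by (intro prob_space_uniform_measure) auto
  then interpret U: prob_space U .
  have eq: "(\<lambda>x. (if fst x \<and> snd x \<le> u then 1 else 0 :: real)) = indicator ({True} \<times> {..u})"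
    by (auto simp: indicator_def fun_eq_iff)
  have A: "{True} \<times> {..u} \<in> sets (B \<Otimes>\<^sub>M U)" unfolding B_def U_def by (intro pair_measureI) auto
  have em: "emeasure (B \<Otimes>\<^sub>M U) ({True} \<times> {..u}) = ennreal \<epsilon> * ennreal u"
  proof -
    have "emeasure (B \<Otimes>\<^sub>M U) ({True} \<times> {..u}) = emeasure B {True} * emeasure U {..u}"
      by (rule U.emeasure_pair_measure_Times) (auto simp: B_def U_def)
    also have "emeasure B {True} = ennreal \<epsilon>" unfolding B_def using e by (simp add: emeasure_pmf_single)
    also have "emeasure U {..u} = ennreal u"
    proof -
      have "{0<..<1} \<inter> {..u} = {0<..u}" using u by auto
      thus ?thesis unfolding U_def using u by (simp add: divide_ennreal_def)
    qed
    finally show ?thesis .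
  qed
  have "(\<integral>x. indicator ({True} \<times> {..u}) x \<partial>(B \<Otimes>\<^sub>M U)) = measure (B \<Otimes>\<^sub>M U) ({True} \<times> {..u})"
    using A by (simp add: Int_absorb2 sets.sets_into_space)
  also have "\<dots> = \<epsilon> * u" using em e u by (simp add: measure_def ennreal_mult[symmetric])
  finally show ?thesis unfolding eq B_def U_def .
qed

theorem lemma11:
  fixes \<beta> :: real
  assumes "1/2 < \<beta>" and "\<beta> < 1"
  shows "\<exists>c>0. \<forall>\<eta> a::real. 0 < \<eta> \<and> \<eta> < 1 \<and> 0 < a \<longrightarrow>
    (\<exists>n0::nat. \<forall>n\<ge>n0. \<forall>u::real. real n powr (\<eta> - 1) \<le> u \<and> u \<le> 1/2 \<longrightarrow>
       measure (coupling_space \<beta> n)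
         {\<omega> \<in> space (coupling_space \<beta> n).
            sqrt (real n) * (F0 n u \<omega> - (\<integral>\<omega>'. F0 n u \<omega>' \<partial>coupling_space \<beta> n))
              > a * sqrt (u * (1 - u))}
       \<le> exp (- a * c * real n powr (\<eta> / 2)) + exp (- (real n powr (1 - (\<beta> + 1/2) / 2))))"
proof (intro exI[of _ "1/4"] conjI allI impI)
  show "(0::real) < 1/4" by simp
  fix \<eta> a :: real assume H: "0 < \<eta> \<and> \<eta> < 1 \<and> 0 < a"
  hence e: "0 < \<eta>" and a: "0 < a" by auto
  define r where "r = (4/a) powr (1/(\<beta> - 1/2))"
  define N where "N = max 1 (nat \<lceil>r\<rceil>)"
  show "\<exists>n0::nat. \<forall>n\<ge>n0. \<forall>u::real. real n powr (\<eta> - 1) \<le> u \<and> u \<le> 1/2 \<longrightarrow>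
       measure (coupling_space \<beta> n)
         {\<omega> \<in> space (coupling_space \<beta> n).
            sqrt (real n) * (F0 n u \<omega> - (\<integral>\<omega>'. F0 n u \<omega>' \<partial>coupling_space \<beta> n))
              > a * sqrt (u * (1 - u))}
       \<le> exp (- a * (1/4) * real n powr (\<eta> / 2)) + exp (- (real n powr (1 - (\<beta> + 1/2) / 2)))"
  proof (intro exI[of _ N] allI impI)
    fix n :: nat and u :: real
    assume nN: "N \<le> n" and uH: "real n powr (\<eta> - 1) \<le> u \<and> u \<le> 1/2"
    have n1: "n \<ge> 1" using nN by (simp add: N_def)
    have npos: "real n > 0" using n1 by simp
    have u1: "real n powr (\<eta> - 1) \<le> u" and u2: "u \<le> 1/2" using uH by auto
    have "real n powr (\<eta> - 1) > 0" using npos by simp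
    hence upos: "u > 0" using u1 by linarith
    have rpos: "r > 0" using a by (simp add: r_def)
    have "nat \<lceil>r\<rceil> \<le> n" using nN unfolding N_def by simp
    hence "real (nat \<lceil>r\<rceil>) \<le> real n" by simp
    moreover have "r \<le> real (nat \<lceil>r\<rceil>)" by (rule real_nat_ceiling_ge)
    ultimately have "r \<le> real n" by linarith
    hence "r powr (\<beta> - 1/2) \<le> real n powr (\<beta> - 1/2)"
      using rpos assms by (intro powr_mono2) auto
    moreover have "r powr (\<beta> - 1/2) = 4 / a"
      using a assms by (simp add: r_def powr_powr)
    ultimately have big: "real n powr (\<beta> - 1/2) \<ge> 4 / a" by simp
    define \<epsilon> where "\<epsilon> = real n powr (-\<beta>)"
    have e0: "0 \<le> \<epsilon>" by (simp add: \<epsilon>_def)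
    have e1: "\<epsilon> \<le> 1"
    proof -
      have "real n powr (-\<beta>) \<le> real n powr 0" using n1 assms by (intro powr_mono) auto
      thus ?thesis using npos by (simp add: \<epsilon>_def)
    qed
    define K where "K = measure_pmf (bernoulli_pmf \<epsilon>) \<Otimes>\<^sub>M uniform_measure lborel {0<..<1::real}"
    define g where "g = (\<lambda>x::bool\<times>real. (if fst x \<and> snd x \<le> u then 1 else 0 :: real))"
    define M where "M = coupling_space \<beta> n"
    have MK: "M = PiM {..<n} (\<lambda>_. K)" unfolding M_def coupling_space_def K_def \<epsilon>_def eps_n_def ..
    have Kp: "prob_space K" unfolding K_def
      by (intro prob_space_pair prob_space_measure_pmf prob_space_uniform_measure) auto
    interpret K: prob_space K by (rule Kp)
    interpret product_prob_space "\<lambda>_. K" "{..<n}"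
      using Kp by (simp add: product_prob_space_def product_sigma_finite_def product_prob_space_axioms_def prob_space_imp_sigma_finite)
    have geq: "g = indicator ({True} \<times> {..u})"
      by (auto simp: g_def indicator_def fun_eq_iff)
    have A: "{True} \<times> {..u} \<in> sets K" unfolding K_def by (intro pair_measureI) auto
    have gm[measurable]: "g \<in> borel_measurable K" unfolding geq using A by simp
    have g01: "g x = 0 \<or> g x = 1" for x by (simp add: g_def)
    have p: "(\<integral>x. g x \<partial>K) = \<epsilon> * u"
      unfolding g_def K_def using e0 e1 upos u2 by (intro intK) auto
    define S where "S = (\<lambda>\<omega>. \<Sum>i<n. g (\<omega> i))"
    have F0eq: "F0 n u \<omega> = (1 / real n) * S \<omega>" for \<omega>
    proof -
      have e1: "{i. i < n \<and> fst (\<omega> i)} = {i\<in>{..<n}. fst (\<omega> i)}" by auto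
      have "(\<Sum>i\<in>{i. i < n \<and> fst (\<omega> i)}. (if snd (\<omega> i) \<le> u then 1 else 0::real)) = (\<Sum>i<n. g (\<omega> i))"
        unfolding e1 by (subst sum.inter_filter) (auto simp: g_def intro!: sum.cong)
      thus ?thesis by (simp add: F0_def S_def)
    qed
    have gi: "integrable M (\<lambda>\<omega>. g (\<omega> i))" if "i < n" for i
    proof (rule P.integrable_const_bound[where B=1, unfolded MK[symmetric]])
      have "\<bar>g x\<bar> \<le> 1" for x using g01[of x] by auto
      then show "AE x in M. norm (g (x i)) \<le> 1" by simp
      show "(\<lambda>\<omega>. g (\<omega> i)) \<in> borel_measurable M" unfolding MK by (rule measurable_compose[OF _ gm], rule measurable_component_singleton) (use that in simp)
    qed
    have Eg: "(\<integral>\<omega>. g (\<omega> i) \<partial>M) = \<epsilon> * u" if "i < n" for i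
    proof -
      have mi: "(\<lambda>\<omega>. \<omega> i) \<in> M \<rightarrow>\<^sub>M K"
        unfolding MK by (rule measurable_component_singleton) (use that in simp)
      have "(\<integral>\<omega>. g (\<omega> i) \<partial>M) = (\<integral>x. g x \<partial>distr M K (\<lambda>\<omega>. \<omega> i))"
        by (rule integral_distr[OF mi gm, symmetric])
      also have "distr M K (\<lambda>\<omega>. \<omega> i) = K" unfolding MK by (rule PiM_component) (use that in simp)
      finally show ?thesis by (simp only: p)
    qed
    have EF: "(\<integral>\<omega>'. F0 n u \<omega>' \<partial>M) = \<epsilon> * u"
    proof -
      have "(\<lambda>\<omega>'. F0 n u \<omega>') = (\<lambda>\<omega>. (1 / real n) * S \<omega>)" by (rule ext) (rule F0eq)
      hence "(\<integral>\<omega>'. F0 n u \<omega>' \<partial>M) = (\<integral>\<omega>. (1 / real n) * S \<omega> \<partial>M)" by (rule arg_cong)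
      also have "\<dots> = (1 / real n) * (\<integral>\<omega>. S \<omega> \<partial>M)" by (rule integral_mult_right_zero)
      also have "(\<integral>\<omega>. S \<omega> \<partial>M) = (\<Sum>i<n. \<integral>\<omega>. g (\<omega> i) \<partial>M)"
        unfolding S_def by (rule Bochner_Integration.integral_sum) (use gi in auto)
      also have "\<dots> = (\<Sum>i<n. \<epsilon> * u)" by (rule sum.cong) (auto intro: Eg)
      also have "\<dots> = real n * (\<epsilon> * u)" by simp
      also have "(1 / real n) * (real n * (\<epsilon> * u)) = \<epsilon> * u" using npos by (simp only: mult.assoc[symmetric]) simp
      finally show ?thesis .
    qed
    define t where "t = a * sqrt (real n) * sqrt (u * (1 - u))"
    have t0: "t \<ge> 0" using a u2 upos by (simp add: t_def)
    have sub: "{\<omega> \<in> space M. sqrt (real n) * (F0 n u \<omega> - (\<integral>\<omega>'. F0 n u \<omega>' \<partial>M)) > a * sqrt (u * (1 - u))}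
        \<subseteq> {\<omega> \<in> space M. S \<omega> \<ge> real n * (\<integral>x. g x \<partial>K) + t}"
    proof safe
      fix \<omega> assume \<omega>: "\<omega> \<in> space M" and gt: "sqrt (real n) * (F0 n u \<omega> - (\<integral>\<omega>'. F0 n u \<omega>' \<partial>M)) > a * sqrt (u * (1 - u))"
      define D where "D = F0 n u \<omega> - \<epsilon> * u"
      have gt': "sqrt (real n) * D > a * sqrt (u * (1 - u))" using gt unfolding EF D_def .
      have sn: "sqrt (real n) > 0" using npos by simp
      have "S \<omega> = real n * F0 n u \<omega>" using npos unfolding F0eq by simp
      hence "S \<omega> - real n * (\<epsilon> * u) = real n * D" unfolding D_def by (simp add: right_diff_distrib)
      also have "real n * D = sqrt (real n) * (sqrt (real n) * D)" using npos by (simp add: mult.assoc[symmetric])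
      also have "\<dots> > sqrt (real n) * (a * sqrt (u * (1 - u)))" using gt' sn by (rule mult_strict_left_mono)
      also have "sqrt (real n) * (a * sqrt (u * (1 - u))) = t" unfolding t_def by (simp only: mult_ac)
      finally show "real n * (\<integral>x. g x \<partial>K) + t \<le> S \<omega>" unfolding p by linarith
    qed
    have setm: "{\<omega> \<in> space M. S \<omega> \<ge> real n * (\<integral>x. g x \<partial>K) + t} \<in> sets M"
      unfolding MK S_def by measurable
    have "measure M {\<omega> \<in> space M. sqrt (real n) * (F0 n u \<omega> - (\<integral>\<omega>'. F0 n u \<omega>' \<partial>M)) > a * sqrt (u * (1 - u))}
        \<le> measure M {\<omega> \<in> space M. S \<omega> \<ge> real n * (\<integral>x. g x \<partial>K) + t}"
      unfolding MK by (rule P.finite_measure_mono[OF sub[unfolded MK] setm[unfolded MK]])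
    also have "\<dots> \<le> exp ((exp 1 - 2) * n * (\<integral>x. g x \<partial>K) - t)"
      unfolding MK S_def by (rule chernoff_prod[OF Kp gm g01 t0])
    also have "\<dots> \<le> exp (- a * (1/4) * real n powr (\<eta> / 2))"
    proof -
      have "(exp 1 - 2) * n * (\<integral>x. g x \<partial>K) - t \<le> - a * (1/4) * real n powr (\<eta> / 2)"
        unfolding p t_def \<epsilon>_def by (rule numeric[OF n1 assms(1) e a big u1 u2])
      thus ?thesis by (simp only: exp_le_cancel_iff)
    qed
    also have "\<dots> \<le> exp (- a * (1/4) * real n powr (\<eta> / 2)) + exp (- (real n powr (1 - (\<beta> + 1/2) / 2)))"
      by simp
    finally show "measure (coupling_space \<beta> n)
         {\<omega> \<in> space (coupling_space \<beta> n).
            sqrt (real n) * (F0 n u \<omega> - (\<integral>\<omega>'. F0 n u \<omega>' \<partial>coupling_space \<beta> n))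
              > a * sqrt (u * (1 - u))}
       \<le> exp (- a * (1/4) * real n powr (\<eta> / 2)) + exp (- (real n powr (1 - (\<beta> + 1/2) / 2)))"
      unfolding M_def[symmetric] .
  qed
qed

end
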